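(* For every $\tau\in\Gamma_S^\infty$, every integer $R\ge1$ and every $x\in(0,1]$, $$P_\tau(x)\;\ge\;1-\frac1R-x\,|\bar{\mathcal B}_R|.$$
   Context: $\Gamma$ is the set of planar rooted, locally finite trees whose root $r$ has degree one; $\Gamma_S^\infty\subset\Gamma$ is the set of infinite trees with exactly one infinite non-backtracking path from $r$ (the spine), with spine vertices $s_1,s_2,\dots$ ordered away from $r$ (set $s_0=r$). $|G|$ is the number of edges of a graph $G$. For $i\ge1$, $\mathcal A^i$ is the component containing $s_i$ after deleting the spine edges $\{s_{i-1},s_i\},\{s_i,s_{i+1}\}$; the hull $\bar{\mathcal B}_R$ is the union of the spine path from $r$ to $s_R$ and $\mathcal A^1,\dots,\mathcal A^R$, so $|\bar{\mathcal B}_R|=R+\sum_{i=1}^R|\mathcal A^i|$. For simple random walk $\omega$ on $\tau$ started at $r$, $P_\tau(x)=\sum_{t\ge1}\mathbb P(\omega(t)=r,\ \omega(t')\ne r\text{ for }0<t'<t\mid \omega(0)=r)(1-x)^{t/2}$ is the generating function of first-return probabilities to the root. *)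

theory Defs
  imports Complex_Main
begin

text \<open>Planarity (a choice of cyclic order of children)
  plays no role in the statement and is not represented.\<close>

definition no_cycles :: "('a \<Rightarrow> 'a \<Rightarrow> bool) \<Rightarrow> bool" where
  "no_cycles E \<longleftrightarrow>
     \<not> (\<exists>cs. length cs \<ge> 3 \<and> distinct cs \<and>
            (\<forall>i. Suc i < length cs \<longrightarrow> E (cs ! i) (cs ! Suc i)) \<and>
            E (last cs) (hd cs))"

definition in_Gamma :: "'a set \<Rightarrow> ('a \<Rightarrow> 'a \<Rightarrow> bool) \<Rightarrow> 'a \<Rightarrow> bool" where
  "in_Gamma V E r \<longleftrightarrow>
     r \<in> V \<and>
     (\<forall>u w. E u w \<longrightarrow> u \<in> V \<and> w \<in> V) \<and>
     (\<forall>u w. E u w \<longrightarrow> E w u) \<and>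
     (\<forall>v. \<not> E v v) \<and>
     (\<forall>v\<in>V. E\<^sup>*\<^sup>* r v) \<and>
     no_cycles E \<and>
     (\<forall>v\<in>V. finite {w. E v w}) \<and>
     card {w. E r w} = 1"

definition nbt_path :: "('a \<Rightarrow> 'a \<Rightarrow> bool) \<Rightarrow> 'a \<Rightarrow> (nat \<Rightarrow> 'a) \<Rightarrow> bool" where
  "nbt_path E r s \<longleftrightarrow> s 0 = r \<and> (\<forall>i. E (s i) (s (Suc i))) \<and> (\<forall>i. s (Suc (Suc i)) \<noteq> s i)"

definition in_Gamma_S_inf :: "'a set \<Rightarrow> ('a \<Rightarrow> 'a \<Rightarrow> bool) \<Rightarrow> 'a \<Rightarrow> bool" where
  "in_Gamma_S_inf V E r \<longleftrightarrow> in_Gamma V E r \<and> infinite V \<and> (\<exists>!s. nbt_path E r s)"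

definition spine :: "('a \<Rightarrow> 'a \<Rightarrow> bool) \<Rightarrow> 'a \<Rightarrow> nat \<Rightarrow> 'a" where
  "spine E r = (THE s. nbt_path E r s)"

definition edges_of :: "('a \<Rightarrow> 'a \<Rightarrow> bool) \<Rightarrow> 'a set set" where
  "edges_of E = {{u, w} | u w. E u w}"

text \<open>A^i: the component containing s_i after deleting the spine edges
  {s_(i-1), s_i} and {s_i, s_(i+1)} (here as its set of edges).\<close>
definition A_comp_edges :: "('a \<Rightarrow> 'a \<Rightarrow> bool) \<Rightarrow> 'a \<Rightarrow> nat \<Rightarrow> 'a set set" where
  "A_comp_edges E r i =
     (let s = spine E r;
          E' = (\<lambda>u w. E u w \<and> {u, w} \<noteq> {s (i - 1), s i} \<and> {u, w} \<noteq> {s i, s (Suc i)})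
      in {{u, w} | u w. E' u w \<and> E'\<^sup>*\<^sup>* (s i) u})"

definition hull_edges :: "('a \<Rightarrow> 'a \<Rightarrow> bool) \<Rightarrow> 'a \<Rightarrow> nat \<Rightarrow> 'a set set" where
  "hull_edges E r R =
     {{spine E r i, spine E r (Suc i)} | i. i < R} \<union> (\<Union>i\<in>{1..R}. A_comp_edges E r i)"

definition hull_size :: "('a \<Rightarrow> 'a \<Rightarrow> bool) \<Rightarrow> 'a \<Rightarrow> nat \<Rightarrow> nat" where
  "hull_size E r R = card (hull_edges E r R)"

definition deg :: "('a \<Rightarrow> 'a \<Rightarrow> bool) \<Rightarrow> 'a \<Rightarrow> nat" where
  "deg E v = card {w. E v w}"

definition first_return_walks :: "('a \<Rightarrow> 'a \<Rightarrow> bool) \<Rightarrow> 'a \<Rightarrow> nat \<Rightarrow> 'a list set" where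
  "first_return_walks E r t =
     {p. t \<ge> 1 \<and> length p = Suc t \<and> p ! 0 = r \<and> p ! t = r \<and>
         (\<forall>i<t. E (p ! i) (p ! Suc i)) \<and> (\<forall>i. 0 < i \<and> i < t \<longrightarrow> p ! i \<noteq> r)}"

definition first_return_prob :: "('a \<Rightarrow> 'a \<Rightarrow> bool) \<Rightarrow> 'a \<Rightarrow> nat \<Rightarrow> real" where
  "first_return_prob E r t =
     (\<Sum>p\<in>first_return_walks E r t. \<Prod>i<t. 1 / real (deg E (p ! i)))"

definition P_gen :: "('a \<Rightarrow> 'a \<Rightarrow> bool) \<Rightarrow> 'a \<Rightarrow> real \<Rightarrow> real" where
  "P_gen E r x = (\<Sum>t. first_return_prob E r (Suc t) * (1 - x) powr (real (Suc t) / 2))"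

end

theory Submission
  imports Defs "HOL-Library.Transitive_Closure_Table" "HOL-Analysis.Convex"
begin

definition walksA :: "('a \<Rightarrow> 'a \<Rightarrow> bool) \<Rightarrow> 'a \<Rightarrow> ('a \<Rightarrow> bool) \<Rightarrow> nat \<Rightarrow> 'a \<Rightarrow> 'a list set" where
  "walksA E r A n v = {p. length p = Suc n \<and> p ! 0 = r \<and> p ! n = v \<and>
      (\<forall>i<n. E (p ! i) (p ! Suc i)) \<and> (\<forall>i. 0 < i \<and> i < n \<longrightarrow> A (p ! i))}"

definition wt :: "('a \<Rightarrow> 'a \<Rightarrow> bool) \<Rightarrow> nat \<Rightarrow> 'a list \<Rightarrow> real" where
  "wt E n p = (\<Prod>i<n. 1 / real (deg E (p ! i)))"

definition muA :: "('a \<Rightarrow> 'a \<Rightarrow> bool) \<Rightarrow> 'a \<Rightarrow> ('a \<Rightarrow> bool) \<Rightarrow> nat \<Rightarrow> 'a \<Rightarrow> real" where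
  "muA E r A n v = (\<Sum>p\<in>walksA E r A n v. wt E n p)"

lemma walksA_0: "walksA E r A 0 v = (if v = r then {[r]} else {})"
proof -
  have "p = [r]" if "length p = Suc 0" "p ! 0 = r" for p :: "'a list"
    using that by (cases p) auto
  then show ?thesis unfolding walksA_def by auto
qed

lemma walksA_Suc:
  "walksA E r A (Suc n) v =
     (\<lambda>q. q @ [v]) ` (\<Union>u\<in>{u. E u v \<and> (n = 0 \<or> A u)}. walksA E r A n u)"
proof
  show "walksA E r A (Suc n) v \<subseteq> (\<lambda>q. q @ [v]) ` (\<Union>u\<in>{u. E u v \<and> (n = 0 \<or> A u)}. walksA E r A n u)"
  proof
    fix p assume p: "p \<in> walksA E r A (Suc n) v"
    define q where "q = take (Suc n) p"
    have lp: "length p = Suc (Suc n)" using p by (simp add: walksA_def)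
    have pq: "p = q @ [v]"
    proof -
      have "p = take (Suc n) p @ drop (Suc n) p" by simp
      moreover have "drop (Suc n) p = [p ! Suc n]"
        using lp by (metis Cons_nth_drop_Suc drop_all le_refl lessI)
      ultimately show ?thesis using p by (simp add: walksA_def q_def)
    qed
    have qi: "\<And>i. i \<le> n \<Longrightarrow> q ! i = p ! i" by (simp add: q_def)
    have "q \<in> walksA E r A n (p ! n)"
      using p lp qi unfolding walksA_def by (auto simp: q_def)
    moreover have "E (p ! n) v \<and> (n = 0 \<or> A (p ! n))"
      using p unfolding walksA_def by auto
    ultimately show "p \<in> (\<lambda>q. q @ [v]) ` (\<Union>u\<in>{u. E u v \<and> (n = 0 \<or> A u)}. walksA E r A n u)"
      using pq by blast
  qed
next
  show "(\<lambda>q. q @ [v]) ` (\<Union>u\<in>{u. E u v \<and> (n = 0 \<or> A u)}. walksA E r A n u) \<subseteq> walksA E r A (Suc n) v"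
  proof
    fix p assume "p \<in> (\<lambda>q. q @ [v]) ` (\<Union>u\<in>{u. E u v \<and> (n = 0 \<or> A u)}. walksA E r A n u)"
    then obtain q u where pq: "p = q @ [v]" and u: "E u v" "n = 0 \<or> A u" and q: "q \<in> walksA E r A n u"
      by blast
    have lq: "length q = Suc n" using q by (simp add: walksA_def)
    have pi: "\<And>i. i \<le> n \<Longrightarrow> p ! i = q ! i" using pq lq by (simp add: nth_append)
    have pn: "p ! Suc n = v" using pq lq by (simp add: nth_append)
    have "\<forall>i<Suc n. E (p ! i) (p ! Suc i)"
    proof (intro allI impI)
      fix i assume i: "i < Suc n"
      show "E (p ! i) (p ! Suc i)"
      proof (cases "i = n")
        case True then show ?thesis using pi pn u q by (simp add: walksA_def)
      next
        case False then show ?thesis using i pi q by (simp add: walksA_def)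
      qed
    qed
    moreover have "\<forall>i. 0 < i \<and> i < Suc n \<longrightarrow> A (p ! i)"
    proof (intro allI impI)
      fix i assume i: "0 < i \<and> i < Suc n"
      show "A (p ! i)"
      proof (cases "i = n")
        case True then show ?thesis using pi u q i by (simp add: walksA_def)
      next
        case False then show ?thesis using i pi q by (simp add: walksA_def)
      qed
    qed
    ultimately show "p \<in> walksA E r A (Suc n) v"
      using pq lq pi pn q unfolding walksA_def by auto
  qed
qed

lemma finite_walksA:
  assumes sym: "\<And>u w. E u w \<Longrightarrow> E w u" and lf: "\<And>v. finite {w. E v w}"
  shows "finite (walksA E r A n v)"
proof (induction n arbitrary: v)
  case 0 then show ?case by (simp add: walksA_0)
next
  case (Suc n)
  have "{u. E u v \<and> (n = 0 \<or> A u)} \<subseteq> {u. E v u}" using sym by auto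
  then have "finite {u. E u v \<and> (n = 0 \<or> A u)}" using lf finite_subset by blast
  then show ?case using Suc by (simp add: walksA_Suc)
qed

lemma muA_0: "muA E r A 0 v = (if v = r then 1 else 0)"
  by (simp add: muA_def walksA_0 wt_def)

lemma muA_Suc:
  assumes sym: "\<And>u w. E u w \<Longrightarrow> E w u" and lf: "\<And>v. finite {w. E v w}"
  shows "muA E r A (Suc n) v = (\<Sum>u\<in>{u. E u v \<and> (n = 0 \<or> A u)}. muA E r A n u / real (deg E u))"
proof -
  let ?U = "{u. E u v \<and> (n = 0 \<or> A u)}"
  have fU: "finite ?U"
  proof -
    have "?U \<subseteq> {u. E v u}" using sym by auto
    then show ?thesis using lf finite_subset by blast
  qed
  have inj: "inj_on (\<lambda>q. q @ [v]) (\<Union>u\<in>?U. walksA E r A n u)"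
    by (auto intro!: inj_onI)
  have disj: "\<forall>u\<in>?U. \<forall>u'\<in>?U. u \<noteq> u' \<longrightarrow> walksA E r A n u \<inter> walksA E r A n u' = {}"
    by (auto simp: walksA_def)
  have wq: "wt E (Suc n) (q @ [v]) = wt E n q / real (deg E u)" if "q \<in> walksA E r A n u" for q u
  proof -
    have lq: "length q = Suc n" and qn: "q ! n = u" using that by (auto simp: walksA_def)
    have "wt E (Suc n) (q @ [v]) = (\<Prod>i<n. 1 / real (deg E ((q @ [v]) ! i))) * (1 / real (deg E ((q@[v]) ! n)))"
      by (simp add: wt_def)
    also have "(\<Prod>i<n. 1 / real (deg E ((q @ [v]) ! i))) = wt E n q"
      unfolding wt_def using lq by (intro prod.cong) (auto simp: nth_append)
    also have "(q@[v]) ! n = u" using lq qn by (simp add: nth_append)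
    finally show ?thesis by simp
  qed
  have "muA E r A (Suc n) v = (\<Sum>p\<in>(\<Union>u\<in>?U. walksA E r A n u). wt E (Suc n) (p @ [v]))"
    unfolding muA_def walksA_Suc using inj by (simp add: sum.reindex)
  also have "\<dots> = (\<Sum>u\<in>?U. \<Sum>p\<in>walksA E r A n u. wt E (Suc n) (p @ [v]))"
    using fU disj finite_walksA[OF sym lf] by (intro sum.UNION_disjoint) auto
  also have "\<dots> = (\<Sum>u\<in>?U. \<Sum>p\<in>walksA E r A n u. wt E n p / real (deg E u))"
    using wq by (intro sum.cong refl) auto
  also have "\<dots> = (\<Sum>u\<in>?U. muA E r A n u / real (deg E u))"
    by (simp add: muA_def sum_divide_distrib)
  finally show ?thesis .
qed

lemma muA_nonneg: "muA E r A n v \<ge> 0"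
  unfolding muA_def wt_def by (intro sum_nonneg prod_nonneg) auto

lemma muA_mass_le:
  assumes sym: "\<And>u w. E u w \<Longrightarrow> E w u" and lf: "\<And>v. finite {w. E v w}"
  shows "finite F \<Longrightarrow> (\<Sum>v\<in>F. muA E r A n v) \<le> 1"
proof (induction n arbitrary: F)
  case 0
  have "(\<Sum>v\<in>F. muA E r A 0 v) = (\<Sum>v\<in>F. if v = r then 1 else 0)"
    by (simp add: muA_0)
  also have "\<dots> \<le> 1" using 0 by (simp add: sum.If_cases)
  finally show ?case .
next
  case (Suc n)
  define F' where "F' = {u. \<exists>v\<in>F. E u v}"
  have fF': "finite F'"
  proof -
    have "F' \<subseteq> (\<Union>v\<in>F. {u. E v u})" using sym by (auto simp: F'_def)
    then show ?thesis using Suc.prems lf finite_subset by blast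
  qed
  let ?P = "\<lambda>v u. E u v \<and> (n = 0 \<or> A u)"
  let ?f = "\<lambda>u. muA E r A n u / real (deg E u)"
  have "(\<Sum>v\<in>F. muA E r A (Suc n) v) = (\<Sum>v\<in>F. \<Sum>u\<in>{u\<in>F'. ?P v u}. ?f u)"
  proof (intro sum.cong refl)
    fix v assume "v \<in> F"
    then have "{u. ?P v u} = {u\<in>F'. ?P v u}" by (auto simp: F'_def)
    then show "muA E r A (Suc n) v = (\<Sum>u\<in>{u\<in>F'. ?P v u}. ?f u)"
      by (simp add: muA_Suc[OF sym lf])
  qed
  also have "\<dots> = (\<Sum>u\<in>F'. \<Sum>v\<in>{v\<in>F. ?P v u}. ?f u)"
    using Suc.prems fF' by (rule sum.swap_restrict)
  also have "\<dots> \<le> (\<Sum>u\<in>F'. muA E r A n u)"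
  proof (intro sum_mono)
    fix u assume "u \<in> F'"
    have c: "card {v\<in>F. ?P v u} \<le> deg E u"
      unfolding deg_def by (rule card_mono[OF lf]) auto
    have "(\<Sum>v\<in>{v\<in>F. ?P v u}. ?f u) = real (card {v\<in>F. ?P v u}) * ?f u" by simp
    also have "\<dots> \<le> muA E r A n u"
    proof (cases "deg E u = 0")
      case True then show ?thesis by (simp add: muA_nonneg)
    next
      case False
      have "real (card {v\<in>F. ?P v u}) * ?f u = muA E r A n u * (real (card {v\<in>F. ?P v u}) / real (deg E u))"
        by simp
      also have "\<dots> \<le> muA E r A n u * 1"
        using c False by (intro mult_left_mono) (auto simp: muA_nonneg)
      finally show ?thesis by simp
    qed
    finally show "(\<Sum>v\<in>{v\<in>F. ?P v u}. ?f u) \<le> muA E r A n u" .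
  qed
  also have "\<dots> \<le> 1" using Suc.IH fF' by blast
  finally show ?case .
qed

lemma muA_le1:
  assumes sym: "\<And>u w. E u w \<Longrightarrow> E w u" and lf: "\<And>v. finite {w. E v w}"
  shows "muA E r A n v \<le> 1"
  using muA_mass_le[OF sym lf, where F="{v}"] by simp

lemma frp_eq:
  "first_return_prob E r (Suc t) = muA E r (\<lambda>v. v \<noteq> r) (Suc t) r"
  unfolding first_return_prob_def muA_def wt_def first_return_walks_def walksA_def
  by (intro sum.cong refl) auto

lemma powr_half_pow:
  fixes y :: real assumes "0 \<le> y"
  shows "y powr (real (Suc t) / 2) = (y powr (1/2)) ^ Suc t"
proof (cases "y = 0")
  case True then show ?thesis by simp
next
  case False
  then have "y > 0" using assms by simp
  then have "(y powr (1/2)) ^ Suc t = (y powr (1/2)) powr real (Suc t)"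
    by (intro powr_realpow[symmetric]) simp
  also have "\<dots> = y powr (real (Suc t) / 2)" by (simp add: powr_powr)
  finally show ?thesis by simp
qed

lemma P_gen_summable_ge:
  assumes sym: "\<And>u w. E u w \<Longrightarrow> E w u" and lf: "\<And>v. finite {w. E v w}"
    and x: "0 < x" "x \<le> 1"
  shows "(\<Sum>t<N. first_return_prob E r (Suc t) * (1 - x) powr (real (Suc t) / 2)) \<le> P_gen E r x"
proof -
  let ?g = "\<lambda>t. first_return_prob E r (Suc t) * (1 - x) powr (real (Suc t) / 2)"
  define q where "q = (1 - x) powr (1/2)"
  have q0: "0 \<le> q" by (simp add: q_def)
  have q1: "q < 1" using x unfolding q_def
    by (simp add: powr_half_sqrt)
  have sq: "summable (\<lambda>t. q ^ Suc t)"
    using q0 q1 by (simp add: summable_geometric summable_mult)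
  have nn: "\<And>t. 0 \<le> ?g t"
    by (simp add: frp_eq muA_nonneg)
  have le: "\<And>t. norm (?g t) \<le> q ^ Suc t"
  proof -
    fix t
    have "norm (?g t) = ?g t" using nn by simp
    also have "\<dots> \<le> 1 * (1 - x) powr (real (Suc t) / 2)"
      by (intro mult_right_mono) (auto simp: frp_eq muA_le1[OF sym lf])
    also have "\<dots> = q ^ Suc t" using x powr_half_pow[of "1 - x" t] by (simp add: q_def)
    finally show "norm (?g t) \<le> q ^ Suc t" .
  qed
  have "summable ?g" by (rule summable_comparison_test[OF _ sq]) (use le in auto)
  then show ?thesis unfolding P_gen_def
    by (rule sum_le_suminf) (use nn in auto)
qed

section \<open>Koenig\<close>

definition RS :: "('a \<Rightarrow> 'a \<Rightarrow> bool) \<Rightarrow> 'a set \<Rightarrow> 'a \<Rightarrow> 'a set" where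
  "RS F X v = {u. (\<lambda>a b. F a b \<and> b \<notin> X)\<^sup>*\<^sup>* v u}"

lemma reach_split:
  assumes "(\<lambda>a b. F a b \<and> b \<notin> X)\<^sup>*\<^sup>* v u"
  shows "u = v \<or> (\<exists>w. F v w \<and> w \<notin> X \<and> (\<lambda>a b. F a b \<and> b \<notin> {v})\<^sup>*\<^sup>* w u)"
  using assms
proof (induction rule: rtranclp_induct)
  case base then show ?case by simp
next
  case (step y z)
  show ?case
  proof (cases "z = v")
    case True then show ?thesis by simp
  next
    case False
    from step.IH show ?thesis
    proof
      assume "y = v" then show ?thesis using step.hyps False by blast
    next
      assume "\<exists>w. F v w \<and> w \<notin> X \<and> (\<lambda>a b. F a b \<and> b \<notin> {v})\<^sup>*\<^sup>* w y"
      then obtain w where w: "F v w" "w \<notin> X" "(\<lambda>a b. F a b \<and> b \<notin> {v})\<^sup>*\<^sup>* w y" by blast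
      have "(\<lambda>a b. F a b \<and> b \<notin> {v})\<^sup>*\<^sup>* w z"
        using w(3) step.hyps(2) False by (auto intro: rtranclp.rtrancl_into_rtrancl)
      then show ?thesis using w by blast
    qed
  qed
qed

lemma inf_step:
  assumes lf: "\<And>v. finite {w. F v w}" and inf: "infinite (RS F X v)"
  shows "\<exists>w. F v w \<and> w \<notin> X \<and> infinite (RS F {v} w)"
proof (rule ccontr)
  assume "\<not> ?thesis"
  then have fw: "\<forall>w\<in>{w. F v w \<and> w \<notin> X}. finite (RS F {v} w)" by blast
  have "RS F X v \<subseteq> insert v (\<Union>w\<in>{w. F v w \<and> w \<notin> X}. RS F {v} w)"
    using reach_split[of F X v] unfolding RS_def by blast
  moreover have "finite (insert v (\<Union>w\<in>{w. F v w \<and> w \<notin> X}. RS F {v} w))"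
    using fw lf[of v] by auto
  ultimately show False using inf finite_subset by blast
qed

primrec kseq :: "('a \<Rightarrow> 'a \<Rightarrow> bool) \<Rightarrow> 'a \<Rightarrow> 'a \<Rightarrow> nat \<Rightarrow> 'a \<times> 'a" where
  "kseq F a b 0 = (a, b)"
| "kseq F a b (Suc n) = (snd (kseq F a b n),
     SOME w. F (snd (kseq F a b n)) w \<and> w \<notin> {fst (kseq F a b n)} \<and>
             infinite (RS F {snd (kseq F a b n)} w))"

lemma koenig:
  assumes lf: "\<And>v. finite {w. F v w}" and inf: "infinite {u. F\<^sup>*\<^sup>* v0 u}"
  shows "\<exists>q. q 0 = v0 \<and> (\<forall>n. F (q n) (q (Suc n))) \<and> (\<forall>n. q (Suc (Suc n)) \<noteq> q n)"
proof -
  have "RS F {} v0 = {u. F\<^sup>*\<^sup>* v0 u}" unfolding RS_def by simp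
  then obtain w1 where w1: "F v0 w1" "infinite (RS F {v0} w1)"
    using inf_step[where v=v0 and X="{}" and F=F, OF lf] inf by auto
  let ?st = "kseq F v0 w1"
  have inv: "F (fst (?st n)) (snd (?st n)) \<and> infinite (RS F {fst (?st n)} (snd (?st n)))" for n
  proof (induction n)
    case 0 then show ?case using w1 by simp
  next
    case (Suc n)
    let ?P = "\<lambda>w. F (snd (?st n)) w \<and> w \<notin> {fst (?st n)} \<and> infinite (RS F {snd (?st n)} w)"
    have "\<exists>w. ?P w" using inf_step[of F, OF lf] Suc.IH by blast
    then have "?P (SOME w. ?P w)" by (rule someI_ex)
    then show ?case by simp
  qed
  have nb: "snd (?st (Suc n)) \<noteq> fst (?st n)" for n
  proof -
    let ?P = "\<lambda>w. F (snd (?st n)) w \<and> w \<notin> {fst (?st n)} \<and> infinite (RS F {snd (?st n)} w)"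
    have "\<exists>w. ?P w" using inf_step[of F, OF lf] inv[of n] by blast
    then have "?P (SOME w. ?P w)" by (rule someI_ex)
    then show ?thesis by simp
  qed
  define q where "q n = fst (?st n)" for n
  have qs: "q (Suc n) = snd (?st n)" for n by (simp add: q_def)
  show ?thesis
  proof (intro exI conjI allI)
    show "q 0 = v0" by (simp add: q_def)
    show "F (q n) (q (Suc n))" for n using inv[of n] by (simp add: qs q_def)
    show "q (Suc (Suc n)) \<noteq> q n" for n using nb[of n] by (simp add: qs q_def)
  qed
qed

lemma rtrancl_path_props:
  assumes "rtrancl_path F x xs y"
  shows "(\<forall>i. Suc i < length (x # xs) \<longrightarrow> F ((x # xs) ! i) ((x # xs) ! Suc i)) \<and>
         (xs \<noteq> [] \<longrightarrow> last xs = y) \<and> (xs = [] \<longrightarrow> x = y)"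
  using assms
proof (induction rule: rtrancl_path.induct)
  case (base x) then show ?case by simp
next
  case (step x y ys z)
  have "\<forall>i. Suc i < length (x # y # ys) \<longrightarrow> F ((x # y # ys) ! i) ((x # y # ys) ! Suc i)"
  proof (intro allI impI)
    fix i assume i: "Suc i < length (x # y # ys)"
    show "F ((x # y # ys) ! i) ((x # y # ys) ! Suc i)"
    proof (cases i)
      case 0 then show ?thesis using step by simp
    next
      case (Suc j) then show ?thesis using step i by simp
    qed
  qed
  then show ?case using step by auto
qed

locale stree =
  fixes V :: "'a set" and E :: "'a \<Rightarrow> 'a \<Rightarrow> bool" and r :: 'a and R :: nat
  assumes G: "in_Gamma_S_inf V E r" and R1: "R \<ge> 1"
begin

abbreviation s where "s \<equiv> spine E r"

lemma sym: "E u w \<Longrightarrow> E w u" using G by (auto simp: in_Gamma_S_inf_def in_Gamma_def)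
lemma irr: "\<not> E v v" using G by (auto simp: in_Gamma_S_inf_def in_Gamma_def)
lemma inV: "E u w \<Longrightarrow> u \<in> V" using G by (auto simp: in_Gamma_S_inf_def in_Gamma_def)
lemma lf: "finite {w. E v w}"
proof (cases "v \<in> V")
  case True then show ?thesis using G by (auto simp: in_Gamma_S_inf_def in_Gamma_def)
next
  case False then have "{w. E v w} = {}" using inV by blast
  then show ?thesis by simp
qed
lemma conn: "v \<in> V \<Longrightarrow> E\<^sup>*\<^sup>* r v" using G by (auto simp: in_Gamma_S_inf_def in_Gamma_def)
lemma nc: "no_cycles E" using G by (auto simp: in_Gamma_S_inf_def in_Gamma_def)
lemma degr: "card {w. E r w} = 1" using G by (auto simp: in_Gamma_S_inf_def in_Gamma_def)
lemma rV: "r \<in> V" using G by (auto simp: in_Gamma_S_inf_def in_Gamma_def)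

lemma ex1: "\<exists>!t. nbt_path E r t" using G by (simp add: in_Gamma_S_inf_def)
lemma s_nbt: "nbt_path E r s"
  unfolding spine_def using ex1 by (rule theI')
lemma s_uniq: "nbt_path E r t \<Longrightarrow> t = s"
  using ex1 s_nbt by blast
lemma s0: "s 0 = r" using s_nbt by (simp add: nbt_path_def)
lemma sE: "E (s i) (s (Suc i))" using s_nbt by (simp add: nbt_path_def)
lemma snb: "s (Suc (Suc i)) \<noteq> s i" using s_nbt by (simp add: nbt_path_def)

lemma s_inj_aux: "0 < d \<Longrightarrow> s a \<noteq> s (a + d)"
proof (rule ccontr)
  assume d0: "0 < d" and "\<not> s a \<noteq> s (a + d)"
  then have ex: "\<exists>d. 0 < d \<and> (\<exists>a. s a = s (a + d))" by auto
  define m where "m = (LEAST d. 0 < d \<and> (\<exists>a. s a = s (a + d)))"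
  have mP: "0 < m \<and> (\<exists>a. s a = s (a + m))"
    unfolding m_def using ex by (rule LeastI_ex)
  have mmin: "\<And>d a. 0 < d \<Longrightarrow> d < m \<Longrightarrow> s a \<noteq> s (a + d)"
    unfolding m_def using not_less_Least by blast
  obtain a where a: "s a = s (a + m)" using mP by blast
  show False
  proof (cases "m = 1")
    case True then show False using a sE[of a] irr[of "s a"] by simp
  next
    case False
    show False
    proof (cases "m = 2")
      case True then show False using a snb[of a] by (simp add: numeral_2_eq_2)
    next
      case False
      then have m3: "m \<ge> 3" using mP \<open>m \<noteq> 1\<close> by linarith
      define cs where "cs = map s [a..<a+m]"
      have len: "length cs = m" by (simp add: cs_def)
      have nth: "\<And>i. i < m \<Longrightarrow> cs ! i = s (a + i)" by (simp add: cs_def)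
      have dist: "distinct cs"
        unfolding cs_def distinct_map
      proof
        show "inj_on s (set [a..<a + m])"
        proof (rule inj_onI)
          fix i j assume i: "i \<in> set [a..<a+m]" and j: "j \<in> set [a..<a+m]" and ij: "s i = s j"
          show "i = j"
          proof (rule ccontr)
            assume "i \<noteq> j"
            then consider "i < j" | "j < i" by linarith
            then show False
            proof cases
              case 1
              have "j - i < m" using i j 1 by auto
              then show False using mmin[of "j - i" i] 1 ij by auto
            next
              case 2
              have "i - j < m" using i j 2 by auto
              then show False using mmin[of "i - j" j] 2 ij by auto
            qed
          qed
        qed
      qed simp
      have path: "\<forall>i. Suc i < length cs \<longrightarrow> E (cs ! i) (cs ! Suc i)"
        using len nth sE by auto
      have cne: "cs \<noteq> []" using len m3 by auto
      have "last cs = cs ! (m - 1)" using cne len by (simp add: last_conv_nth)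
      also have "\<dots> = s (a + (m - 1))" using nth m3 by simp
      finally have "last cs = s (a + (m - 1))" .
      moreover have "hd cs = s (a + m)" using nth[of 0] m3 a cne by (simp add: hd_conv_nth)
      moreover have "E (s (a + (m - 1))) (s (a + m))"
      proof -
        have eq: "Suc (a + (m - 1)) = a + m" using m3 by simp
        show ?thesis using sE[of "a + (m - 1)"] unfolding eq .
      qed
      ultimately have "E (last cs) (hd cs)" by simp
      then show False using nc dist path len m3 unfolding no_cycles_def by blast
    qed
  qed
qed

lemma s_inj: "s i = s j \<longleftrightarrow> i = j"
proof
  assume h: "s i = s j"
  show "i = j"
  proof (rule ccontr)
    assume "i \<noteq> j"
    then consider "i < j" | "j < i" by linarith
    then show False
    proof cases
      case 1 then show False using s_inj_aux[of "j - i" i] h by auto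
    next
      case 2 then show False using s_inj_aux[of "i - j" j] h by auto
    qed
  qed
qed simp

lemma r_nbr: "E r w \<Longrightarrow> w = s 1"
proof -
  assume "E r w"
  moreover have "E r (s 1)" using sE[of 0] s0 by simp
  moreover obtain z where "{w. E r w} = {z}" using degr by (rule card_1_singletonE)
  ultimately show ?thesis by (metis mem_Collect_eq singletonD)
qed

lemma sym_rtranclp:
  assumes symF: "\<And>u w. F u w \<Longrightarrow> F w u" and "F\<^sup>*\<^sup>* a b"
  shows "F\<^sup>*\<^sup>* b a"
  using assms(2)
proof (induction rule: rtranclp_induct)
  case base then show ?case by simp
next
  case (step y z) then show ?case using symF[of y z] converse_rtranclp_into_rtranclp[of F z y a] by blast
qed

lemma bridge:
  assumes ab: "E a b" and reach: "(\<lambda>u w. E u w \<and> {u, w} \<noteq> {a, b})\<^sup>*\<^sup>* a b"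
  shows False
proof -
  let ?F = "\<lambda>u w. E u w \<and> {u, w} \<noteq> {a, b}"
  have anb: "a \<noteq> b" using ab irr by auto
  obtain xs where "rtrancl_path ?F a xs b" using reach rtranclp_eq_rtrancl_path[of ?F a b] by blast
  then obtain ys where p: "rtrancl_path ?F a ys b" and d: "distinct (a # ys)"
    by (rule rtrancl_path_distinct)
  note pp = rtrancl_path_props[OF p]
  have yne: "ys \<noteq> []" using pp anb by auto
  have ly: "last ys = b" using pp yne by auto
  have l2: "length ys \<ge> 2"
  proof (rule ccontr)
    assume "\<not> length ys \<ge> 2"
    moreover have "length ys \<noteq> 0" using yne by simp
    ultimately have "length ys = 1" by linarith
    then obtain c where "ys = [c]" by (cases ys) (auto simp: Suc_le_eq)
    then have "?F a b" using pp ly by auto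
    then show False by simp
  qed
  let ?cs = "a # ys"
  have "\<forall>i. Suc i < length ?cs \<longrightarrow> E (?cs ! i) (?cs ! Suc i)" using pp by blast
  moreover have "E (last ?cs) (hd ?cs)" using ly yne ab sym by simp
  moreover have "length ?cs \<ge> 3" using l2 by simp
  ultimately show False using nc d unfolding no_cycles_def by blast
qed

end

context stree
begin

definition Fj :: "nat \<Rightarrow> 'a \<Rightarrow> 'a \<Rightarrow> bool" where
  "Fj j u w \<longleftrightarrow> E u w \<and> {u, w} \<noteq> {s j, s (Suc j)}"

definition Cj :: "nat \<Rightarrow> 'a set" where
  "Cj j = {u. (Fj j)\<^sup>*\<^sup>* r u}"

definition ind :: "nat \<Rightarrow> 'a \<Rightarrow> real" where
  "ind j u = (if u \<in> Cj j then 0 else 1)"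

definition lev :: "'a \<Rightarrow> real" where
  "lev u = (\<Sum>j<R. ind j u)"

lemma Fj_sym: "Fj j u w \<Longrightarrow> Fj j w u"
  unfolding Fj_def using sym by (auto simp: insert_commute)

lemma transfer:
  assumes "E u w" "{u, w} \<noteq> {s j, s (Suc j)}"
  shows "u \<in> Cj j \<longleftrightarrow> w \<in> Cj j"
proof
  assume "u \<in> Cj j"
  moreover have "Fj j u w" using assms by (simp add: Fj_def)
  ultimately show "w \<in> Cj j" unfolding Cj_def by (auto intro: rtranclp.rtrancl_into_rtrancl)
next
  assume "w \<in> Cj j"
  moreover have "Fj j w u" using assms sym[of u w] by (simp add: Fj_def insert_commute)
  ultimately show "u \<in> Cj j" unfolding Cj_def by (auto intro: rtranclp.rtrancl_into_rtrancl)
qed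

lemma ind_transfer:
  assumes "E u w" "{u, w} \<noteq> {s j, s (Suc j)}"
  shows "ind j w - ind j u = 0"
  using transfer[OF assms] by (simp add: ind_def)

lemma rC: "r \<in> Cj j" by (simp add: Cj_def)

lemma sC: "k \<le> j \<Longrightarrow> s k \<in> Cj j"
proof (induction k)
  case 0 then show ?case using s0 rC by simp
next
  case (Suc k)
  have "{s k, s (Suc k)} \<noteq> {s j, s (Suc j)}"
    using Suc.prems by (auto simp: doubleton_eq_iff s_inj)
  then have "Fj j (s k) (s (Suc k))" using sE by (simp add: Fj_def)
  then show ?case using Suc unfolding Cj_def by (auto intro: rtranclp.rtrancl_into_rtrancl)
qed

lemma sNC_base: "s (Suc j) \<notin> Cj j"
proof
  assume a: "s (Suc j) \<in> Cj j"
  have eq: "(\<lambda>u w. E u w \<and> {u, w} \<noteq> {s j, s (Suc j)}) = Fj j"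
    by (intro ext) (simp add: Fj_def)
  have b: "(Fj j)\<^sup>*\<^sup>* r (s j)" using sC[of j j] by (simp add: Cj_def)
  have "(Fj j)\<^sup>*\<^sup>* (s j) r" by (rule sym_rtranclp[OF Fj_sym b])
  moreover have "(Fj j)\<^sup>*\<^sup>* r (s (Suc j))" using a by (simp add: Cj_def)
  ultimately have "(Fj j)\<^sup>*\<^sup>* (s j) (s (Suc j))" by (rule rtranclp_trans)
  then show False using bridge[OF sE[of j]] unfolding eq by blast
qed

lemma sNC: "Suc j \<le> k \<Longrightarrow> s k \<notin> Cj j"
proof (induction k rule: dec_induct)
  case base then show ?case by (rule sNC_base)
next
  case (step k)
  have "{s k, s (Suc k)} \<noteq> {s j, s (Suc j)}"
    using step.hyps by (auto simp: doubleton_eq_iff s_inj)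
  then show ?case using transfer[OF sE[of k]] step.IH by blast
qed

lemma lev_r: "lev r = 0" by (simp add: lev_def ind_def rC)
lemma lev_sR: "lev (s R) = real R"
proof -
  have "\<And>j. j < R \<Longrightarrow> ind j (s R) = 1" using sNC by (simp add: ind_def)
  then show ?thesis by (simp add: lev_def)
qed
lemma lev_nonneg: "lev u \<ge> 0" unfolding lev_def ind_def by (intro sum_nonneg) auto

lemma harm_j:
  "(\<Sum>w\<in>{w. E u w}. ind j w - ind j u) =
     (if u = s j then 1 else 0) - (if u = s (Suc j) then 1 else 0)"
proof -
  let ?N = "{w. E u w}"
  let ?D = "{w\<in>?N. {u, w} = {s j, s (Suc j)}}"
  have "(\<Sum>w\<in>?N. ind j w - ind j u) = (\<Sum>w\<in>?D. ind j w - ind j u)"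
    using ind_transfer lf by (intro sum.mono_neutral_right) auto
  also have "\<dots> = (if u = s j then 1 else 0) - (if u = s (Suc j) then 1 else 0)"
  proof -
    have ne: "s j \<noteq> s (Suc j)" by (simp add: s_inj)
    consider "u = s j" | "u = s (Suc j)" | "u \<noteq> s j \<and> u \<noteq> s (Suc j)" by blast
    then show ?thesis
    proof cases
      case 1
      have "?D = {s (Suc j)}" using 1 ne sE[of j] by (auto simp: doubleton_eq_iff)
      then show ?thesis using 1 ne sC[of j j] sNC_base by (simp add: ind_def)
    next
      case 2
      have "?D = {s j}" using 2 ne sE[of j] sym by (auto simp: doubleton_eq_iff)
      then show ?thesis using 2 ne sC[of j j] sNC_base by (simp add: ind_def)
    next
      case 3
      have D: "?D = {}" using 3 by (auto simp: doubleton_eq_iff)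
      show ?thesis unfolding D using 3 by simp
    qed
  qed
  finally show ?thesis .
qed

lemma harm:
  "(\<Sum>w\<in>{w. E u w}. lev w) - real (deg E u) * lev u =
     (if u = r then 1 else 0) - (if u = s R then 1 else 0)"
proof -
  let ?N = "{w. E u w}"
  have "(\<Sum>w\<in>?N. lev w) - real (deg E u) * lev u = (\<Sum>w\<in>?N. lev w - lev u)"
    by (simp add: sum_subtractf deg_def)
  also have "\<dots> = (\<Sum>w\<in>?N. \<Sum>j<R. ind j w - ind j u)"
    by (simp add: lev_def sum_subtractf)
  also have "\<dots> = (\<Sum>j<R. \<Sum>w\<in>?N. ind j w - ind j u)"
    by (rule sum.swap)
  also have "\<dots> = (\<Sum>j<R. (if u = s j then 1 else 0) - (if u = s (Suc j) then 1 else 0))"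
    by (simp add: harm_j)
  also have "\<dots> = (if u = s 0 then 1 else 0) - (if u = s R then 1 else 0)"
    by (rule sum_lessThan_telescope')
  finally show ?thesis using s0 by simp
qed

end

context stree
begin

definition U :: "'a set" where
  "U = {u. (\<lambda>a b. E a b \<and> b \<noteq> s R)\<^sup>*\<^sup>* r u}"

definition Ei :: "nat \<Rightarrow> 'a \<Rightarrow> 'a \<Rightarrow> bool" where
  "Ei i u w \<longleftrightarrow> E u w \<and> {u, w} \<noteq> {s (i - 1), s i} \<and> {u, w} \<noteq> {s i, s (Suc i)}"

lemma A_comp_eq: "A_comp_edges E r i = {{u, w} | u w. Ei i u w \<and> (Ei i)\<^sup>*\<^sup>* (s i) u}"
proof -
  have "Ei i = (\<lambda>u w. E u w \<and> {u, w} \<noteq> {s (i - 1), s i} \<and> {u, w} \<noteq> {s i, s (Suc i)})"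
    by (intro ext) (simp add: Ei_def)
  then show ?thesis by (simp add: A_comp_edges_def Let_def)
qed

lemma sR_ne_r: "s R \<noteq> r" using R1 s0 s_inj[of R 0] by auto

lemma U_r: "r \<in> U" by (simp add: U_def)

lemma U_sR: "s R \<notin> U"
proof
  assume "s R \<in> U"
  then have "(\<lambda>a b. E a b \<and> b \<noteq> s R)\<^sup>*\<^sup>* r (s R)" by (simp add: U_def)
  then show False using sR_ne_r by (cases rule: rtranclp.cases) auto
qed

lemma U_step: "u \<in> U \<Longrightarrow> E u w \<Longrightarrow> w \<noteq> s R \<Longrightarrow> w \<in> U"
  unfolding U_def by (auto intro: rtranclp.rtrancl_into_rtrancl)

lemma U_conn: "u \<in> U \<Longrightarrow> E\<^sup>*\<^sup>* u r"
proof -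
  assume "u \<in> U"
  then have "(\<lambda>a b. E a b \<and> b \<noteq> s R)\<^sup>*\<^sup>* r u" by (simp add: U_def)
  then have "E\<^sup>*\<^sup>* r u" by (rule rtranclp_mono[THEN predicate2D, rotated]) auto
  then show ?thesis using sym_rtranclp[of E] sym by blast
qed

lemma U_nbr: "u \<in> U \<Longrightarrow> \<exists>w. E u w"
proof -
  assume "u \<in> U"
  then have h: "(\<lambda>a b. E a b \<and> b \<noteq> s R)\<^sup>*\<^sup>* r u" by (simp add: U_def)
  show ?thesis
  proof (cases "u = r")
    case True then show ?thesis using sE[of 0] s0 by auto
  next
    case False
    from h False show ?thesis by (cases rule: rtranclp.cases) (auto dest: sym)
  qed
qed

lemma U_deg: "u \<in> U \<Longrightarrow> deg E u \<ge> 1"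
proof -
  assume "u \<in> U"
  then obtain w where "E u w" using U_nbr by blast
  then have "{w. E u w} \<noteq> {}" by auto
  then show ?thesis using lf[of u] by (simp add: deg_def Suc_le_eq card_gt_0_iff)
qed

lemma U_char:
  assumes "u \<in> U" shows "u = r \<or> (\<exists>i. 1 \<le> i \<and> i < R \<and> (Ei i)\<^sup>*\<^sup>* (s i) u)"
proof -
  have "(\<lambda>a b. E a b \<and> b \<noteq> s R)\<^sup>*\<^sup>* r u" using assms by (simp add: U_def)
  then show ?thesis
proof (induction rule: rtranclp_induct)
  case base then show ?case by simp
next
  case (step y z)
  have ez: "E y z" and zR: "z \<noteq> s R" using step.hyps by auto
  from step.IH show ?case
  proof
    assume yr: "y = r"
    then have z1: "z = s 1" using r_nbr ez by simp
    then have "R \<noteq> 1" using zR by auto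
    then have "1 < R" using R1 by simp
    then show ?thesis using z1 by auto
  next
    assume "\<exists>i. 1 \<le> i \<and> i < R \<and> (Ei i)\<^sup>*\<^sup>* (s i) y"
    then obtain i where i: "1 \<le> i" "i < R" "(Ei i)\<^sup>*\<^sup>* (s i) y" by blast
    consider "{y, z} = {s (i - 1), s i}" | "{y, z} = {s i, s (Suc i)}" | "Ei i y z"
      using ez by (auto simp: Ei_def)
    then show ?thesis
    proof cases
      case 1
      then have "z = s (i - 1) \<or> z = s i" by (auto simp: doubleton_eq_iff)
      then show ?thesis
      proof
        assume z: "z = s (i - 1)"
        show ?thesis
        proof (cases "i = 1")
          case True then show ?thesis using z s0 by simp
        next
          case False then show ?thesis using z i by (intro disjI2 exI[of _ "i - 1"]) auto
        qed
      next
        assume "z = s i" then show ?thesis using i by auto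
      qed
    next
      case 2
      then have "z = s i \<or> z = s (Suc i)" by (auto simp: doubleton_eq_iff)
      then show ?thesis
      proof
        assume z: "z = s (Suc i)"
        then have "Suc i \<noteq> R" using zR by auto
        then show ?thesis using z i by (intro disjI2 exI[of _ "Suc i"]) auto
      next
        assume "z = s i" then show ?thesis using i by auto
      qed
    next
      case 3
      then show ?thesis using i by (auto intro: rtranclp.rtrancl_into_rtrancl)
    qed
  qed
qed
qed

lemma hull_eq: "hull_edges E r R =
   {{s i, s (Suc i)} | i. i < R} \<union> (\<Union>i\<in>{1..R}. A_comp_edges E r i)"
  by (simp add: hull_edges_def)

lemma U_hull: "u \<in> U \<Longrightarrow> E u w \<Longrightarrow> {u, w} \<in> hull_edges E r R"
proof -
  assume uU: "u \<in> U" and uw: "E u w"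
  have sp: "\<And>i. i < R \<Longrightarrow> {s i, s (Suc i)} \<in> hull_edges E r R"
    unfolding hull_eq by blast
  from U_char[OF uU] show ?thesis
  proof
    assume "u = r"
    then have "{u, w} = {s 0, s (Suc 0)}" using r_nbr uw s0 by simp
    then show ?thesis using sp[of 0] R1 by simp
  next
    assume "\<exists>i. 1 \<le> i \<and> i < R \<and> (Ei i)\<^sup>*\<^sup>* (s i) u"
    then obtain i where i: "1 \<le> i" "i < R" "(Ei i)\<^sup>*\<^sup>* (s i) u" by blast
    consider "{u, w} = {s (i - 1), s i}" | "{u, w} = {s i, s (Suc i)}" | "Ei i u w"
      using uw by (auto simp: Ei_def)
    then show ?thesis
    proof cases
      case 1
      have "Suc (i - 1) = i" using i by simp
      then show ?thesis using 1 sp[of "i - 1"] i by simp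
    next
      case 2 then show ?thesis using sp[of i] i by simp
    next
      case 3
      then have "{u, w} \<in> A_comp_edges E r i" unfolding A_comp_eq using i by blast
      then show ?thesis unfolding hull_eq using i by auto
    qed
  qed
qed

end

context stree
begin

lemma A_fin: assumes i1: "1 \<le> i" shows "finite (A_comp_edges E r i)"
proof -
  let ?F = "Ei i"
  have lfF: "\<And>v. finite {w. ?F v w}"
  proof -
    fix v have "{w. ?F v w} \<subseteq> {w. E v w}" by (auto simp: Ei_def)
    then show "finite {w. ?F v w}" using lf finite_subset by blast
  qed
  have finC: "finite {u. ?F\<^sup>*\<^sup>* (s i) u}"
  proof (rule ccontr)
    assume "infinite {u. ?F\<^sup>*\<^sup>* (s i) u}"
    then obtain q where q0: "q 0 = s i" and qF: "\<And>n. ?F (q n) (q (Suc n))"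
      and qnb: "\<And>n. q (Suc (Suc n)) \<noteq> q n"
      using koenig[of "Ei i", OF lfF] by blast
    have q1: "{s i, q 1} \<noteq> {s (i - 1), s i}" "{s i, q 1} \<noteq> {s i, s (Suc i)}"
      using qF[of 0] q0 by (auto simp: Ei_def)
    have q1a: "q 1 \<noteq> s (i - 1)" using q1(1) by (auto simp: insert_commute)
    have q1b: "q 1 \<noteq> s (Suc i)" using q1(2) by auto
    define t where "t n = (if n \<le> i then s n else q (n - i))" for n
    have tE: "E (t n) (t (Suc n))" for n
    proof -
      consider "Suc n \<le> i" | "n = i" | "i < n" by linarith
      then show ?thesis
      proof cases
        case 1 then show ?thesis using sE[of n] by (simp add: t_def)
      next
        case 2 then show ?thesis using qF[of 0] q0 by (simp add: t_def Ei_def)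
      next
        case 3
        then have "Suc n - i = Suc (n - i)" by simp
        then show ?thesis using 3 qF[of "n - i"] by (simp add: t_def Ei_def)
      qed
    qed
    have tnb: "t (Suc (Suc n)) \<noteq> t n" for n
    proof -
      consider "Suc (Suc n) \<le> i" | "Suc n = i" | "i \<le> n" by linarith
      then show ?thesis
      proof cases
        case 1 then show ?thesis using snb[of n] by (simp add: t_def)
      next
        case 2
        then have "Suc (Suc n) - i = 1" "n = i - 1" by auto
        then show ?thesis using 2 q1a by (simp add: t_def)
      next
        case 3
        then have "Suc (Suc n) - i = Suc (Suc (n - i))" by simp
        then show ?thesis using 3 qnb[of "n - i"] qnb[of 0] q0 by (simp add: t_def)
      qed
    qed
    have "nbt_path E r t" unfolding nbt_path_def using tE tnb s0 by (simp add: t_def)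
    then have "t = s" by (rule s_uniq)
    moreover have "t (Suc i) = q 1" by (simp add: t_def)
    ultimately show False using q1b by simp
  qed
  have "A_comp_edges E r i \<subseteq> (\<lambda>(u, w). {u, w}) ` (SIGMA u:{u. ?F\<^sup>*\<^sup>* (s i) u}. {w. E u w})"
    unfolding A_comp_eq by (auto simp: Ei_def)
  moreover have "finite (SIGMA u:{u. ?F\<^sup>*\<^sup>* (s i) u}. {w. E u w})"
    using finC lf by (intro finite_SigmaI) auto
  ultimately show ?thesis using finite_subset by blast
qed

end

context stree
begin

lemma hull_fin: "finite (hull_edges E r R)"
proof -
  have "{{s i, s (Suc i)} | i. i < R} = (\<lambda>i. {s i, s (Suc i)}) ` {..<R}" by auto
  then have "finite {{s i, s (Suc i)} | i. i < R}" by simp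
  moreover have "finite (\<Union>i\<in>{1..R}. A_comp_edges E r i)"
    using A_fin by (intro finite_UN_I) auto
  ultimately show ?thesis unfolding hull_eq by (rule finite_UnI)
qed

lemma hull_pairs: "e \<in> hull_edges E r R \<Longrightarrow> \<exists>a b. e = {a, b}"
  unfolding hull_eq A_comp_eq by blast

lemma U_fin: "finite U"
proof -
  have "U \<subseteq> \<Union>(hull_edges E r R)"
  proof
    fix u assume "u \<in> U"
    then obtain w where "E u w" using U_nbr by blast
    then have "{u, w} \<in> hull_edges E r R" using U_hull \<open>u \<in> U\<close> by blast
    then show "u \<in> \<Union>(hull_edges E r R)" by blast
  qed
  moreover have "finite (\<Union>(hull_edges E r R))"
  proof (rule finite_Union[OF hull_fin])
    fix M assume "M \<in> hull_edges E r R"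
    then obtain a b where "M = {a, b}" using hull_pairs by blast
    then show "finite M" by simp
  qed
  ultimately show ?thesis using finite_subset by blast
qed

lemma K_le: "(\<Sum>u\<in>U. real (deg E u)) \<le> 2 * real (hull_size E r R)"
proof -
  let ?H = "hull_edges E r R"
  let ?S = "SIGMA u:U. {w. E u w}"
  let ?P = "\<lambda>e. {(a, b). a \<in> e \<and> b \<in> e \<and> a \<noteq> b}"
  have fS: "finite ?S" using U_fin lf by (intro finite_SigmaI) auto
  have eqS: "(\<Sum>u\<in>U. real (deg E u)) = real (card ?S)"
    using U_fin lf by (simp add: deg_def)
  have "card ?S \<le> card (\<Union>e\<in>?H. ?P e)"
  proof (rule card_mono)
    show "finite (\<Union>e\<in>?H. ?P e)"
    proof (intro finite_UN_I hull_fin)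
      fix e assume "e \<in> ?H"
      then obtain a b where "e = {a, b}" using hull_pairs by blast
      then have "?P e \<subseteq> {(a, b), (b, a)}" by auto
      then show "finite (?P e)" using finite_subset by blast
    qed
    show "?S \<subseteq> (\<Union>e\<in>?H. ?P e)"
    proof
      fix p assume "p \<in> ?S"
      then obtain u w where p: "p = (u, w)" "u \<in> U" "E u w" by blast
      then have "{u, w} \<in> ?H" using U_hull by blast
      moreover have "u \<noteq> w" using p irr by auto
      ultimately show "p \<in> (\<Union>e\<in>?H. ?P e)" using p by blast
    qed
  qed
  also have "\<dots> \<le> (\<Sum>e\<in>?H. card (?P e))" using hull_fin by (rule card_UN_le)
  also have "\<dots> \<le> (\<Sum>e\<in>?H. 2)"
  proof (rule sum_mono)
    fix e assume "e \<in> ?H"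
    then obtain a b where "e = {a, b}" using hull_pairs by blast
    then have "?P e \<subseteq> {(a, b), (b, a)}" by auto
    then have "card (?P e) \<le> card {(a, b), (b, a)}" by (rule card_mono[rotated]) simp
    also have "\<dots> \<le> 2" by (rule order_trans[OF card_insert_le_m1]) auto
    finally show "card (?P e) \<le> 2" .
  qed
  also have "\<dots> = 2 * card ?H" by simp
  finally have "card ?S \<le> 2 * card ?H" .
  then have "real (card ?S) \<le> 2 * real (card ?H)" by linarith
  then show ?thesis using eqS by (simp add: hull_size_def)
qed

end

context stree
begin

definition A2 :: "'a \<Rightarrow> bool" where "A2 v \<longleftrightarrow> v \<noteq> r \<and> v \<noteq> s R"
definition mu :: "nat \<Rightarrow> 'a \<Rightarrow> real" where "mu n v = muA E r A2 n v"
definition Z :: "'a set" where "Z = insert (s R) U"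
definition al :: "nat \<Rightarrow> 'a \<Rightarrow> bool" where "al n u \<longleftrightarrow> n = 0 \<or> A2 u"

lemma mu_nonneg: "mu n v \<ge> 0" by (simp add: mu_def muA_nonneg)
lemma mu0: "mu 0 v = (if v = r then 1 else 0)" by (simp add: mu_def muA_0)
lemma muS: "mu (Suc n) v = (\<Sum>u\<in>{u. E u v \<and> al n u}. mu n u / real (deg E u))"
  by (simp add: mu_def al_def muA_Suc[OF sym lf])

lemma Zfin: "finite Z" using U_fin by (simp add: Z_def)
lemma rZ: "r \<in> Z" using U_r by (simp add: Z_def)
lemma sRZ: "s R \<in> Z" by (simp add: Z_def)

lemma walks_Z: "walksA E r A2 n v \<noteq> {} \<Longrightarrow> v \<in> Z"
proof (induction n arbitrary: v)
  case 0 then show ?case using rZ by (simp add: walksA_0 split: if_splits)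
next
  case (Suc n)
  then obtain u where u: "E u v" "n = 0 \<or> A2 u" "walksA E r A2 n u \<noteq> {}"
    unfolding walksA_Suc by blast
  have uZ: "u \<in> Z" using Suc.IH u(3) .
  have "u \<in> U"
  proof (cases "n = 0")
    case True then have "u = r" using u(3) by (simp add: walksA_0 split: if_splits)
    then show ?thesis using U_r by simp
  next
    case False then have "u \<noteq> s R" using u(2) by (simp add: A2_def)
    then show ?thesis using uZ by (simp add: Z_def)
  qed
  then show ?case using U_step u(1) by (auto simp: Z_def)
qed

lemma mu_out: "v \<notin> Z \<Longrightarrow> mu n v = 0"
proof -
  assume "v \<notin> Z"
  then have "walksA E r A2 n v = {}" using walks_Z by blast
  then show ?thesis by (simp add: mu_def muA_def)
qed

lemma al_U: "al n u \<Longrightarrow> u \<in> Z \<Longrightarrow> mu n u \<noteq> 0 \<Longrightarrow> u \<in> U"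
proof -
  assume a: "al n u" "u \<in> Z" "mu n u \<noteq> 0"
  show "u \<in> U"
  proof (cases "n = 0")
    case True then have "u = r" using a(3) by (simp add: mu0 split: if_splits)
    then show ?thesis using U_r by simp
  next
    case False then have "u \<noteq> s R" using a(1) by (simp add: al_def A2_def)
    then show ?thesis using a(2) by (simp add: Z_def)
  qed
qed

lemma nbrs_Z: "u \<in> U \<Longrightarrow> {v\<in>Z. E u v} = {v. E u v}"
  using U_step by (auto simp: Z_def)

lemma muS_Z: "mu (Suc n) v = (\<Sum>u\<in>Z. if E u v \<and> al n u then mu n u / real (deg E u) else 0)"
proof -
  let ?S = "{u. E u v \<and> al n u}"
  have fS: "finite ?S"
  proof -
    have "?S \<subseteq> {u. E v u}" using sym by auto
    then show ?thesis using lf finite_subset by blast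
  qed
  have "mu (Suc n) v = (\<Sum>u\<in>?S \<inter> Z. mu n u / real (deg E u))"
    unfolding muS using fS mu_out by (intro sum.mono_neutral_right) auto
  also have "\<dots> = (\<Sum>u\<in>Z \<inter> ?S. mu n u / real (deg E u))" by (simp add: Int_commute)
  also have "\<dots> = (\<Sum>u\<in>Z. if u \<in> ?S then mu n u / real (deg E u) else 0)"
    using Zfin by (rule sum.inter_restrict)
  finally show ?thesis by simp
qed

lemma push:
  "(\<Sum>v\<in>Z. mu (Suc n) v * g v) =
     (\<Sum>u\<in>Z. if al n u then mu n u / real (deg E u) * (\<Sum>w\<in>{w. E u w}. g w) else 0)"
proof -
  have "(\<Sum>v\<in>Z. mu (Suc n) v * g v) =
      (\<Sum>v\<in>Z. \<Sum>u\<in>Z. (if E u v \<and> al n u then mu n u / real (deg E u) else 0) * g v)"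
    by (simp add: muS_Z sum_distrib_right)
  also have "\<dots> = (\<Sum>u\<in>Z. \<Sum>v\<in>Z. (if E u v \<and> al n u then mu n u / real (deg E u) else 0) * g v)"
    by (rule sum.swap)
  also have "\<dots> = (\<Sum>u\<in>Z. if al n u then mu n u / real (deg E u) * (\<Sum>w\<in>{w. E u w}. g w) else 0)"
  proof (rule sum.cong[OF refl])
    fix u assume uZ: "u \<in> Z"
    show "(\<Sum>v\<in>Z. (if E u v \<and> al n u then mu n u / real (deg E u) else 0) * g v) =
          (if al n u then mu n u / real (deg E u) * (\<Sum>w\<in>{w. E u w}. g w) else 0)"
    proof (cases "al n u \<and> mu n u \<noteq> 0")
      case True
      then have uU: "u \<in> U" using al_U uZ by blast
      have "(\<Sum>v\<in>Z. (if E u v \<and> al n u then mu n u / real (deg E u) else 0) * g v) =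
            (\<Sum>v\<in>Z. if E u v then mu n u / real (deg E u) * g v else 0)"
        using True by (intro sum.cong) auto
      also have "\<dots> = (\<Sum>v\<in>{v\<in>Z. E u v}. mu n u / real (deg E u) * g v)"
        by (rule sum.inter_filter[OF Zfin, symmetric])
      also have "\<dots> = mu n u / real (deg E u) * (\<Sum>w\<in>{w. E u w}. g w)"
        unfolding nbrs_Z[OF uU] by (rule sum_distrib_left[symmetric])
      finally show ?thesis using True by simp
    next
      case False
      then show ?thesis by (auto intro!: sum.neutral)
    qed
  qed
  finally show ?thesis .
qed

lemma split_Z: "(\<Sum>v\<in>Z. f v) = (\<Sum>v\<in>Z. if A2 v then f v else 0) + f r + f (s R)"
proof -
  have "(\<Sum>v\<in>Z. f v) = (\<Sum>v\<in>Z. (if A2 v then f v else 0) + (if A2 v then 0 else f v))"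
    by (intro sum.cong) auto
  also have "\<dots> = (\<Sum>v\<in>Z. if A2 v then f v else 0) + (\<Sum>v\<in>Z. if A2 v then 0 else f v)"
    by (rule sum.distrib)
  also have "(\<Sum>v\<in>Z. if A2 v then 0 else f v) = (\<Sum>v\<in>{r, s R}. if A2 v then 0 else f v)"
    using Zfin rZ sRZ by (intro sum.mono_neutral_right) (auto simp: A2_def)
  also have "\<dots> = f r + f (s R)" using sR_ne_r by (simp add: A2_def)
  finally show ?thesis by (simp add: add.assoc)
qed

definition m :: "nat \<Rightarrow> real" where
  "m n = (\<Sum>u\<in>Z. if al n u then mu n u else 0)"
definition Hn :: "nat \<Rightarrow> real" where
  "Hn n = (\<Sum>u\<in>Z. if A2 u then mu n u * lev u else 0)"

lemma deg_r: "deg E r = 1" using degr by (simp add: deg_def)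

lemma mass_step: "mu (Suc n) r + mu (Suc n) (s R) + m (Suc n) = m n"
proof -
  have "(\<Sum>v\<in>Z. mu (Suc n) v * 1) =
     (\<Sum>u\<in>Z. if al n u then mu n u / real (deg E u) * (\<Sum>w\<in>{w. E u w}. 1) else 0)"
    by (rule push)
  also have "\<dots> = m n" unfolding m_def
  proof (rule sum.cong[OF refl])
    fix u assume uZ: "u \<in> Z"
    show "(if al n u then mu n u / real (deg E u) * (\<Sum>w\<in>{w. E u w}. 1) else 0) =
          (if al n u then mu n u else 0)"
    proof (cases "al n u \<and> mu n u \<noteq> 0")
      case True
      then have "u \<in> U" using al_U uZ by blast
      then have "deg E u \<ge> 1" by (rule U_deg)
      then show ?thesis using True by (simp add: deg_def)
    next
      case False then show ?thesis by auto
    qed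
  qed
  finally have "(\<Sum>v\<in>Z. mu (Suc n) v) = m n" by simp
  moreover have "(\<Sum>v\<in>Z. mu (Suc n) v) = m (Suc n) + mu (Suc n) r + mu (Suc n) (s R)"
    by (subst split_Z) (simp add: m_def al_def)
  ultimately show ?thesis by simp
qed

lemma lev_step: "Hn (Suc n) + mu (Suc n) (s R) * real R = (if n = 0 then 1 else Hn n)"
proof -
  have "(\<Sum>v\<in>Z. mu (Suc n) v * lev v) =
     (\<Sum>u\<in>Z. if al n u then mu n u / real (deg E u) * (\<Sum>w\<in>{w. E u w}. lev w) else 0)"
    by (rule push)
  also have "\<dots> = (\<Sum>u\<in>Z. if n = 0 then (if u = r then 1 else 0) else (if A2 u then mu n u * lev u else 0))"
  proof (rule sum.cong[OF refl])
    fix u assume uZ: "u \<in> Z"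
    have hu: "(\<Sum>w\<in>{w. E u w}. lev w) = real (deg E u) * lev u + (if u = r then 1 else 0) - (if u = s R then 1 else 0)"
      using harm[of u] by simp
    show "(if al n u then mu n u / real (deg E u) * (\<Sum>w\<in>{w. E u w}. lev w) else 0) =
          (if n = 0 then (if u = r then 1 else 0) else (if A2 u then mu n u * lev u else 0))"
    proof (cases "n = 0")
      case True
      show ?thesis
      proof (cases "u = r")
        case True then show ?thesis using \<open>n = 0\<close> hu deg_r sR_ne_r lev_r by (simp add: mu0 al_def)
      next
        case False then show ?thesis using \<open>n = 0\<close> by (simp add: mu0)
      qed
    next
      case False
      show ?thesis
      proof (cases "A2 u \<and> mu n u \<noteq> 0")
        case True
        then have "u \<in> U" using al_U uZ by (auto simp: al_def)
        then have "deg E u \<ge> 1" by (rule U_deg)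
        then show ?thesis using True False hu by (simp add: al_def A2_def)
      next
        case c: False then show ?thesis using False by (auto simp: al_def)
      qed
    qed
  qed
  also have "\<dots> = (if n = 0 then 1 else Hn n)"
    using Zfin rZ by (simp add: Hn_def)
  finally have "(\<Sum>v\<in>Z. mu (Suc n) v * lev v) = (if n = 0 then 1 else Hn n)" .
  moreover have "(\<Sum>v\<in>Z. mu (Suc n) v * lev v) = Hn (Suc n) + mu (Suc n) (s R) * real R"
    by (subst split_Z) (simp add: Hn_def lev_r lev_sR)
  ultimately show ?thesis by simp
qed

lemma m0: "m 0 = 1"
proof -
  have "m 0 = (\<Sum>u\<in>Z. if u = r then 1 else 0)" by (simp add: m_def al_def mu0)
  also have "\<dots> = 1" using Zfin rZ by simp
  finally show ?thesis .
qed

lemma Hn_nonneg: "Hn n \<ge> 0"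
  unfolding Hn_def using mu_nonneg lev_nonneg by (intro sum_nonneg) auto

lemma m_nonneg: "m n \<ge> 0"
  unfolding m_def using mu_nonneg by (intro sum_nonneg) auto

lemma mass_sum: "(\<Sum>k<N. mu (Suc k) r + mu (Suc k) (s R)) + m N = 1"
proof (induction N)
  case 0 then show ?case using m0 by simp
next
  case (Suc N) then show ?case using mass_step[of N] by simp
qed

lemma lev_sum: "N \<ge> 1 \<Longrightarrow> real R * (\<Sum>k<N. mu (Suc k) (s R)) + Hn N = 1"
proof (induction N rule: dec_induct)
  case base then show ?case using lev_step[of 0] by (simp add: algebra_simps)
next
  case (step N)
  then show ?case using lev_step[of N] by (simp add: algebra_simps)
qed

lemma b_sum: "(\<Sum>k<N. mu (Suc k) (s R)) \<le> 1 / real R"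
proof (cases "N \<ge> 1")
  case True
  have "real R * (\<Sum>k<N. mu (Suc k) (s R)) \<le> 1" using lev_sum[OF True] Hn_nonneg[of N] by linarith
  then show ?thesis using R1 by (simp add: field_simps)
next
  case False then have "N = 0" by simp
  then show ?thesis by simp
qed

lemma time_sum:
  "(\<Sum>k<N. real (Suc k) * mu (Suc k) r) + real N * m N \<le> (\<Sum>n<N. m n)"
proof (induction N)
  case 0 then show ?case by simp
next
  case (Suc N)
  have st: "mu (Suc N) r + m (Suc N) \<le> m N" using mass_step[of N] mu_nonneg[of "Suc N" "s R"] by linarith
  have "real (Suc N) * (mu (Suc N) r + m (Suc N)) \<le> real (Suc N) * m N"
    using st by (intro mult_left_mono) auto
  then show ?case using Suc.IH by (simp add: algebra_simps)
qed

end

lemma bern_powr: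
  fixes y a :: real
  assumes "0 \<le> y" "y \<le> 1" "1 \<le> a"
  shows "1 - a * (1 - y) \<le> y powr a"
proof (cases "y = 0")
  case True then show ?thesis using assms by simp
next
  case False
  then have y0: "0 < y" using assms by simp
  have "(y powr a) powr (1 / a) * 1 powr (1 - 1 / a) \<le> (1 / a) * (y powr a) + (1 - 1 / a) * 1"
    using assms y0 by (intro Youngs_inequality_0) auto
  moreover have "(y powr a) powr (1 / a) = y" using assms y0 by (simp add: powr_powr)
  ultimately have "y \<le> (1 / a) * (y powr a) + (1 - 1 / a)" by simp
  then have "a * y \<le> a * ((1 / a) * (y powr a) + (1 - 1 / a))" using assms by simp
  also have "\<dots> = y powr a + a - 1" using assms by (simp add: field_simps)
  finally show ?thesis by (simp add: algebra_simps)
qed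

lemma all_eq:
  fixes f :: "'b \<Rightarrow> real"
  assumes "finite A" "\<forall>a\<in>A. f a \<le> M" "real (card A) * M \<le> (\<Sum>a\<in>A. f a)" "a \<in> A"
  shows "f a = M"
proof (rule ccontr)
  assume "f a \<noteq> M"
  then have "f a < M" using assms by force
  then have "(\<Sum>a\<in>A. f a) < (\<Sum>a\<in>A. M)"
    using assms by (intro sum_strict_mono_ex1) auto
  then show False using assms(3) by simp
qed

lemma wt_nonneg: "0 \<le> wt E n p"
  unfolding wt_def by (intro prod_nonneg) auto

context stree
begin

definition Gf :: "nat \<Rightarrow> 'a \<Rightarrow> real" where
  "Gf N v = (\<Sum>n<N. if al n v then mu n v else 0)"

lemma sum_m: "(\<Sum>n<N. m n) = (\<Sum>v\<in>Z. Gf N v)"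
  unfolding m_def Gf_def by (rule sum.swap)

lemma Gf_mono: "Gf N v \<le> Gf (Suc N) v"
  unfolding Gf_def using mu_nonneg by simp

lemma Gf_r: "Gf N r = (if N = 0 then 0 else 1)"
proof (induction N)
  case 0 then show ?case by (simp add: Gf_def)
next
  case (Suc N)
  have "Gf (Suc N) r = Gf N r + (if al N r then mu N r else 0)" by (simp add: Gf_def)
  then show ?case using Suc by (simp add: al_def A2_def mu0)
qed

lemma Gf_sR: "Gf N (s R) = 0"
  unfolding Gf_def using sR_ne_r by (intro sum.neutral) (auto simp: al_def A2_def mu0)

lemma Gf_rec:
  assumes vU: "v \<in> U" and vr: "v \<noteq> r"
  shows "Gf (Suc N) v = (\<Sum>u\<in>{u. E u v}. Gf N u / real (deg E u))"
proof -
  have alv: "al n v" for n using vU vr U_sR by (auto simp: al_def A2_def)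
  have fN: "finite {u. E u v}"
  proof -
    have "{u. E u v} \<subseteq> {u. E v u}" using sym by auto
    then show ?thesis using lf finite_subset by blast
  qed
  have "Gf (Suc N) v = (\<Sum>n<Suc N. mu n v)" by (simp add: Gf_def alv)
  also have "\<dots> = mu 0 v + (\<Sum>n<N. mu (Suc n) v)" by (rule sum.lessThan_Suc_shift)
  also have "mu 0 v = 0" using vr by (simp add: mu0)
  also have "(\<Sum>n<N. mu (Suc n) v) = (\<Sum>n<N. \<Sum>u\<in>{u. E u v}. (if al n u then mu n u else 0) / real (deg E u))"
  proof (rule sum.cong[OF refl])
    fix n
    have "{u. E u v \<and> al n u} = {u\<in>{u. E u v}. al n u}" by auto
    then have "mu (Suc n) v = (\<Sum>u\<in>{u\<in>{u. E u v}. al n u}. mu n u / real (deg E u))"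
      by (simp add: muS)
    also have "\<dots> = (\<Sum>u\<in>{u. E u v}. if al n u then mu n u / real (deg E u) else 0)"
      using fN by (rule sum.inter_filter)
    also have "\<dots> = (\<Sum>u\<in>{u. E u v}. (if al n u then mu n u else 0) / real (deg E u))"
      by (intro sum.cong refl) simp
    finally show "mu (Suc n) v = (\<Sum>u\<in>{u. E u v}. (if al n u then mu n u else 0) / real (deg E u))" .
  qed
  also have "\<dots> = (\<Sum>u\<in>{u. E u v}. \<Sum>n<N. (if al n u then mu n u else 0) / real (deg E u))"
    by (rule sum.swap)
  also have "\<dots> = (\<Sum>u\<in>{u. E u v}. Gf N u / real (deg E u))"
    by (simp add: Gf_def sum_divide_distrib)
  finally show ?thesis by simp
qed

lemma green_pt: "v \<in> U \<Longrightarrow> Gf N v \<le> real (deg E v)"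
proof -
  define g where "g v = Gf N v / real (deg E v)" for v
  have Une: "U \<noteq> {}" using U_r by blast
  define M where "M = Max (g ` U)"
  have gM: "\<And>u. u \<in> U \<Longrightarrow> g u \<le> M" unfolding M_def using U_fin by auto
  have gr: "g r \<le> 1" using deg_r Gf_r by (simp add: g_def)
  have gsR: "g (s R) = 0" by (simp add: g_def Gf_sR)
  have M1: "M \<le> 1"
  proof (rule ccontr)
    assume "\<not> M \<le> 1"
    then have M1: "M > 1" by simp
    have clos: "u \<in> U \<and> g u = M" if vU: "v \<in> U" and gv: "g v = M" and vu: "E v u" for v u
    proof -
      have vr: "v \<noteq> r" using gv gr M1 by auto
      have d1: "deg E v \<ge> 1" using vU by (rule U_deg)
      let ?N = "{u. E u v}"
      have Neq: "?N = {u. E v u}" using sym by auto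
      have fN: "finite ?N" using Neq lf by simp
      have cN: "card ?N = deg E v" using Neq by (simp add: deg_def)
      have bnd: "\<forall>w\<in>?N. g w \<le> M"
      proof
        fix w assume "w \<in> ?N"
        then have "E v w" using sym by auto
        show "g w \<le> M"
        proof (cases "w = s R")
          case True then show ?thesis using gsR M1 by simp
        next
          case False then show ?thesis using U_step[OF vU \<open>E v w\<close>] gM by simp
        qed
      qed
      have "real (card ?N) * M = Gf N v"
        using gv d1 cN by (simp add: g_def field_simps)
      also have "\<dots> \<le> Gf (Suc N) v" by (rule Gf_mono)
      also have "\<dots> = (\<Sum>w\<in>?N. g w)" using Gf_rec[OF vU vr] by (simp add: g_def)
      finally have "real (card ?N) * M \<le> (\<Sum>w\<in>?N. g w)" .
      then have gu: "g u = M" using all_eq[OF fN bnd] vu sym by blast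
      then have "u \<noteq> s R" using gsR M1 by auto
      then have "u \<in> U" using U_step[OF vU vu] by simp
      then show ?thesis using gu by simp
    qed
    have "M \<in> g ` U" unfolding M_def using U_fin Une by (intro Max_in) auto
    then obtain v0 where v0: "v0 \<in> U" "g v0 = M" by auto
    have reach: "z \<in> U \<and> g z = M" if "E\<^sup>*\<^sup>* v0 z" for z
      using that
    proof (induction rule: rtranclp_induct)
      case base then show ?case using v0 by simp
    next
      case (step y z) then show ?case using clos by blast
    qed
    have "E\<^sup>*\<^sup>* v0 r" by (rule U_conn[OF v0(1)])
    then have "r \<in> U \<and> g r = M" by (rule reach)
    then show False using gr M1 by simp
  qed
  assume vU: "v \<in> U"
  have "g v \<le> 1" using gM[OF vU] M1 by simp
  moreover have "deg E v \<ge> 1" using vU by (rule U_deg)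
  ultimately show "Gf N v \<le> real (deg E v)" by (simp add: g_def field_simps)
qed

lemma green: "(\<Sum>n<N. m n) \<le> (\<Sum>u\<in>U. real (deg E u))"
proof -
  have "(\<Sum>n<N. m n) = (\<Sum>v\<in>Z. Gf N v)" by (rule sum_m)
  also have "\<dots> = Gf N (s R) + (\<Sum>v\<in>U. Gf N v)"
    unfolding Z_def using U_fin U_sR by simp
  also have "\<dots> \<le> (\<Sum>u\<in>U. real (deg E u))"
    using green_pt Gf_sR by (simp add: sum_mono)
  finally show ?thesis .
qed

lemma mu1r: "mu (Suc 0) r = 0"
  unfolding muS using irr by (intro sum.neutral) (auto simp: mu0)

lemma frp_ge: "mu n r \<le> first_return_prob E r n" if n1: "n \<ge> 1"
proof -
  obtain t where n: "n = Suc t" using n1 by (cases n) auto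
  have "walksA E r A2 (Suc t) r \<subseteq> walksA E r (\<lambda>v. v \<noteq> r) (Suc t) r"
    by (auto simp: walksA_def A2_def)
  then have "muA E r A2 (Suc t) r \<le> muA E r (\<lambda>v. v \<noteq> r) (Suc t) r"
    unfolding muA_def
    by (intro sum_mono2 finite_walksA[OF sym lf]) (auto intro: wt_nonneg)
  then show ?thesis using n by (simp add: frp_eq mu_def)
qed

lemma main:
  assumes x: "0 < x" "x \<le> 1"
  shows "1 - 1 / real R - x * real (hull_size E r R) \<le> P_gen E r x"
proof -
  define K where "K = (\<Sum>u\<in>U. real (deg E u))"
  define N where "N = nat \<lceil>2 / x\<rceil> + 1"
  have N1: "N \<ge> 1" by (simp add: N_def)
  have xN: "x * real N \<ge> 2"
  proof -
    have "2 / x \<le> real (nat \<lceil>2 / x\<rceil>)" by linarith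
    then have "2 / x \<le> real N" by (simp add: N_def)
    then show ?thesis using x by (simp add: field_simps)
  qed
  let ?a = "\<lambda>t. mu (Suc t) r"
  have "(\<Sum>t<N. ?a t * (1 - x * real (Suc t) / 2)) \<le>
        (\<Sum>t<N. first_return_prob E r (Suc t) * (1 - x) powr (real (Suc t) / 2))"
  proof (rule sum_mono)
    fix t
    have p0: "0 \<le> (1 - x) powr (real (Suc t) / 2)" by simp
    have "?a t * (1 - x * real (Suc t) / 2) \<le> ?a t * (1 - x) powr (real (Suc t) / 2)"
    proof (cases "t = 0")
      case True then show ?thesis using mu1r by simp
    next
      case False
      have "1 - real (Suc t) / 2 * (1 - (1 - x)) \<le> (1 - x) powr (real (Suc t) / 2)"
        using x False by (intro bern_powr) auto
      then have "1 - x * real (Suc t) / 2 \<le> (1 - x) powr (real (Suc t) / 2)" by (simp add: algebra_simps)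
      then show ?thesis using mu_nonneg by (intro mult_left_mono) auto
    qed
    also have "\<dots> \<le> first_return_prob E r (Suc t) * (1 - x) powr (real (Suc t) / 2)"
      using frp_ge[of "Suc t"] p0 by (intro mult_right_mono) auto
    finally show "?a t * (1 - x * real (Suc t) / 2) \<le> first_return_prob E r (Suc t) * (1 - x) powr (real (Suc t) / 2)" .
  qed
  also have "\<dots> \<le> P_gen E r x" using P_gen_summable_ge[OF sym lf x] .
  finally have P1: "(\<Sum>t<N. ?a t * (1 - x * real (Suc t) / 2)) \<le> P_gen E r x" .
  have split: "(\<Sum>t<N. ?a t * (1 - x * real (Suc t) / 2)) =
       (\<Sum>t<N. ?a t) - x / 2 * (\<Sum>t<N. real (Suc t) * ?a t)"
  proof -
    have "\<And>t. ?a t * (1 - x * real (Suc t) / 2) = ?a t - x / 2 * (real (Suc t) * ?a t)"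
      by (simp add: algebra_simps)
    then show ?thesis by (simp add: sum_subtractf sum_distrib_left)
  qed
  have sa: "(\<Sum>t<N. ?a t) \<ge> 1 - m N - 1 / real R"
  proof -
    have "(\<Sum>t<N. ?a t) + (\<Sum>t<N. mu (Suc t) (s R)) + m N = 1"
      using mass_sum[of N] by (simp add: sum.distrib)
    then show ?thesis using b_sum[of N] by linarith
  qed
  have st: "(\<Sum>t<N. real (Suc t) * ?a t) \<le> K - real N * m N"
    using time_sum[of N] green[of N] by (simp add: K_def)
  have mN: "m N \<ge> 0" by (rule m_nonneg)
  have "1 - 1 / real R - x / 2 * K \<le> (1 - m N - 1 / real R) - x / 2 * (K - real N * m N)"
  proof -
    have "m N \<le> x / 2 * (real N * m N)"
    proof -
      have "1 * m N \<le> (x * real N / 2) * m N" using xN mN by (intro mult_right_mono) auto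
      then show ?thesis by (simp add: algebra_simps)
    qed
    then show ?thesis by (simp add: algebra_simps)
  qed
  also have "\<dots> \<le> (\<Sum>t<N. ?a t) - x / 2 * (\<Sum>t<N. real (Suc t) * ?a t)"
  proof -
    have "x / 2 * (\<Sum>t<N. real (Suc t) * ?a t) \<le> x / 2 * (K - real N * m N)"
      using st x by (intro mult_left_mono) auto
    then show ?thesis using sa by linarith
  qed
  also have "\<dots> \<le> P_gen E r x" using P1 split by simp
  finally have "1 - 1 / real R - x / 2 * K \<le> P_gen E r x" .
  moreover have "x / 2 * K \<le> x * real (hull_size E r R)"
    using K_le x by (simp add: K_def)
  ultimately show ?thesis by linarith
qed

end

theorem lemma3:
  fixes V :: "'a set" and E :: "'a \<Rightarrow> 'a \<Rightarrow> bool" and r :: 'a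
    and R :: nat and x :: real
  assumes "in_Gamma_S_inf V E r"
    and "R \<ge> 1"
    and "0 < x" and "x \<le> 1"
  shows "P_gen E r x \<ge> 1 - 1 / real R - x * real (hull_size E r R)"
proof -
  interpret stree V E r R using assms(1,2) by unfold_locales
  show ?thesis using main assms(3,4) by simp
qed

end
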